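(* For real $\alpha\ne0$ and real $\beta$, let $F_{\alpha,\beta}(x)=\bigl(1+\frac{\alpha}{x}\bigr)^{x+\beta}$, defined for $x>\max\{0,-\alpha\}$ or $x<\min\{0,-\alpha\}$. Then: (1) For $\alpha<0$: $F_{\alpha,\beta}\in\mathcal{C_L}[(-\alpha,\infty)]$ if and only if $\beta\le\alpha$; and $1/F_{\alpha,\beta}\in\mathcal{C_L}[(-\alpha,\infty)]$ if and only if $2\beta\ge\alpha$. (2) For $\alpha>0$: $F_{\alpha,\beta}\in\mathcal{C_L}[(0,\infty)]$ if and only if $2\beta\ge\alpha$; and $1/F_{\alpha,\beta}\in\mathcal{C_L}[(0,\infty)]$ if and only if $\beta\le0$. (3) For $\alpha<0$: $F_{\alpha,\beta}\in\mathcal{A_L}[(-\infty,0)]$ if and only if $\beta\ge0$; and $1/F_{\alpha,\beta}\in\mathcal{A_L}[(-\infty,0)]$ if and only if $2\beta\le\alpha$. (4) For $\alpha>0$: $F_{\alpha,\beta}\in\mathcal{A_L}[(-\infty,-\alpha)]$ if and only if $2\beta\le\alpha$; and $1/F_{\alpha,\beta}\in\mathcal{A_L}[(-\infty,-\alpha)]$ if and only if $\beta\ge\alpha$.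
   Context: For an interval $I$: a positive function $f$ is logarithmically completely monotonic on $I$ if it has derivatives of all orders on $I$ and $(-1)^k[\ln f(x)]^{(k)}\ge0$ for all $x\in I$ and all positive integers $k$; the set of such functions is $\mathcal{C_L}[I]$. A positive function $f$ is logarithmically absolutely monotonic on $I$ if it has derivatives of all orders on $I$ and $[\ln f(x)]^{(k)}\ge0$ for all $x\in I$ and all positive integers $k$; the set of such functions is $\mathcal{A_L}[I]$. *)

theory Defs
  imports "HOL-Analysis.Analysis"
begin

text \<open>Derivatives of all orders on I: every iterated derivative is differentiable at
every point of I (the intervals used are open, so this is local to I).\<close>

definition smooth_on :: "(real \<Rightarrow> real) \<Rightarrow> real set \<Rightarrow> bool" where
  "smooth_on f I \<longleftrightarrow> (\<forall>k. \<forall>x\<in>I. ((deriv ^^ k) f) differentiable (at x))"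

definition log_completely_monotonic_on :: "(real \<Rightarrow> real) \<Rightarrow> real set \<Rightarrow> bool" where
  "log_completely_monotonic_on f I \<longleftrightarrow>
     (\<forall>x\<in>I. f x > 0) \<and> smooth_on f I \<and>
     (\<forall>k::nat. k \<ge> 1 \<longrightarrow> (\<forall>x\<in>I. (-1) ^ k * (deriv ^^ k) (\<lambda>y. ln (f y)) x \<ge> 0))"

definition log_absolutely_monotonic_on :: "(real \<Rightarrow> real) \<Rightarrow> real set \<Rightarrow> bool" where
  "log_absolutely_monotonic_on f I \<longleftrightarrow>
     (\<forall>x\<in>I. f x > 0) \<and> smooth_on f I \<and>
     (\<forall>k::nat. k \<ge> 1 \<longrightarrow> (\<forall>x\<in>I. (deriv ^^ k) (\<lambda>y. ln (f y)) x \<ge> 0))"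

text \<open>F_{alpha,beta}(x) = (1 + alpha/x)^(x+beta); on the domains considered 1 + alpha/x > 0.\<close>
definition F :: "real \<Rightarrow> real \<Rightarrow> real \<Rightarrow> real" where
  "F \<alpha> \<beta> x = (1 + \<alpha> / x) powr (x + \<beta>)"

end

theory Submission
  imports Defs
begin


lemma iter_deriv_eq:
  assumes "open S" "\<And>x. x \<in> S \<Longrightarrow> f x = E 0 x"
    "\<And>k x. x \<in> S \<Longrightarrow> (E k has_real_derivative E (Suc k) x) (at x)"
  shows "x \<in> S \<Longrightarrow> (deriv ^^ k) f x = E k x"
proof (induction k arbitrary: x)
  case 0 then show ?case using assms(2) by simp
next
  case (Suc k)
  have ev: "eventually (\<lambda>y. (deriv ^^ k) f y = E k y) (nhds x)"
    using eventually_nhds_in_open[OF assms(1) Suc.prems] by (rule eventually_mono) (use Suc.IH in auto)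
  have "(deriv ^^ Suc k) f x = deriv ((deriv ^^ k) f) x" by simp
  also have "\<dots> = deriv (E k) x" by (rule deriv_cong_ev[OF ev refl])
  also have "\<dots> = E (Suc k) x" by (rule DERIV_imp_deriv[OF assms(3)[OF Suc.prems]])
  finally show ?case .
qed

lemma inv_pow_deriv:
  fixes c x :: real
  assumes "x + c \<noteq> 0"
  shows "((\<lambda>y. 1 / (y + c) ^ k) has_real_derivative (- real k * (1 / (x + c) ^ Suc k))) (at x)"
proof -
  have "((\<lambda>y. inverse ((y + c) ^ k)) has_real_derivative
        - ((real k * (x+c)^(k - 1) * 1) * inverse (((x+c)^k)^Suc (Suc 0)))) (at x)"
  proof (rule DERIV_inverse_fun)
    have "((\<lambda>y. y + c) has_real_derivative 1) (at x)" by (auto intro!: derivative_eq_intros)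
    from DERIV_power[OF this, of k] show "((\<lambda>y. (y + c) ^ k) has_real_derivative real k * (x+c)^(k - 1) * 1) (at x)" by simp
  qed (use assms in simp)
  moreover have "- ((real k * (x+c)^(k - 1) * 1) * inverse (((x+c)^k)^Suc (Suc 0))) = - real k * (1 / (x + c) ^ Suc k)"
  proof (cases k)
    case 0 then show ?thesis by simp
  next
    case (Suc j)
    define z where "z = x + c"
    have z: "z \<noteq> 0" using assms z_def by simp
    have "- ((real k * z^(k - 1) * 1) * inverse ((z^k)^Suc (Suc 0))) = - real k * (1 / z ^ Suc k)"
      using z Suc by (simp add: field_simps power2_eq_square)
    then show ?thesis by (simp add: z_def)
  qed
  ultimately show ?thesis by (simp only: divide_inverse mult_1_left)
qed

fun E :: "real \<Rightarrow> real \<Rightarrow> nat \<Rightarrow> real \<Rightarrow> real" where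
  "E a b 0 = (\<lambda>x. (x + b) * ln (1 + a / x))"
| "E a b (Suc 0) = (\<lambda>x. ln (1 + a / x) + (x + b) * (1 / (x + a) - 1 / x))"
| "E a b (Suc (Suc n)) = (\<lambda>x. (-1)^n * fact n * (1 / (x + a) ^ (n+1) - 1 / (x + 0) ^ (n+1))
     + (-1)^n * fact (Suc n) * (b * (1 / (x + 0) ^ (n+2)) - (b - a) * (1 / (x + a) ^ (n+2))))"

lemma eq_aux:
  fixes A B C D a b :: real
  shows "(-1)^n * fact n * ((- real (n+1) * A) - (- real (n+1) * B))
     + (-1)^n * fact (Suc n) * (b * (- real (n+2) * C) - (b - a) * (- real (n+2) * D))
   = (-1)^(Suc n) * fact (Suc n) * (A - B) + (-1)^(Suc n) * fact (Suc (Suc n)) * (b * C - (b - a) * D)"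
  by (simp add: fact_Suc algebra_simps)

lemma E_deriv:
  fixes a b x :: real
  assumes "x \<noteq> 0" "x + a \<noteq> 0" "1 + a / x > 0"
  shows "(E a b k has_real_derivative E a b (Suc k) x) (at x)"
proof -
  have h2: "((\<lambda>y. ln (1 + a / y)) has_real_derivative (1 / (x + a) - 1 / x)) (at x)"
  proof -
    have h0: "((\<lambda>y. 1 + a / y) has_real_derivative (- a / x^2)) (at x)"
      by (rule DERIV_cong, (rule derivative_eq_intros refl)+) (use assms in \<open>simp_all add: power2_eq_square\<close>)
    have "((\<lambda>y. ln (1 + a / y)) has_real_derivative (1 / (1 + a/x)) * (- a / x^2)) (at x)"
      by (rule DERIV_chain2[OF DERIV_ln_divide h0]) (use assms in simp)
    moreover have "(1 / (1 + a/x)) * (- a / x^2) = 1 / (x + a) - 1 / x"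
      using assms by (simp add: field_simps power2_eq_square)
    ultimately show ?thesis by simp
  qed
show ?thesis
proof (cases k)
  case 0
  have h1: "((\<lambda>y. y + b) has_real_derivative 1) (at x)" by (auto intro!: derivative_eq_intros)
  have "((\<lambda>x. (x + b) * ln (1 + a / x)) has_real_derivative
      1 * ln (1 + a / x) + (x + b) * (1 / (x + a) - 1 / x)) (at x)"
    by (rule DERIV_mult'[OF h1 h2, THEN DERIV_cong]) simp
  then show ?thesis using 0 by simp
next
  case (Suc j)
  show ?thesis
  proof (cases j)
    case 0
    have h1: "((\<lambda>y. y + b) has_real_derivative 1) (at x)" by (auto intro!: derivative_eq_intros)
    have p1: "((\<lambda>y. 1 / (y + a)) has_real_derivative - (1 / (x + a)^2)) (at x)"
      using inv_pow_deriv[of x a 1] assms by (simp add: power2_eq_square)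
    have p2: "((\<lambda>y. 1 / y) has_real_derivative - (1 / x^2)) (at x)"
      using inv_pow_deriv[of x 0 1] assms by (simp add: power2_eq_square)
    have h3: "((\<lambda>y. 1 / (y + a) - 1 / y) has_real_derivative
        - (1 / (x + a)^2) - - (1 / x^2)) (at x)"
      by (intro DERIV_diff p1 p2)
    have "((\<lambda>x. ln (1 + a / x) + (x + b) * (1 / (x + a) - 1 / x)) has_real_derivative
       (1 / (x + a) - 1 / x) + (1 * (1 / (x + a) - 1 / x) + (x + b) * (- (1 / (x + a)^2) - - (1 / x^2)))) (at x)"
      by (intro DERIV_add h2) (rule DERIV_cong[OF DERIV_mult'[OF h1 h3]], simp)
    moreover have "(1 / (x + a) - 1 / x) + (1 * (1 / (x + a) - 1 / x) + (x + b) * (- (1 / (x + a)^2) - - (1 / x^2)))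
       = E a b 2 x"
    proof -
      define u where "u = 1 / x"
      define v where "v = 1 / (x + a)"
      have hu: "x * u = 1" using assms u_def by simp
      have hv: "(x + a) * v = 1" using assms v_def by simp
      have "E a b 2 x = (v - u) + (b * u^2 - (b - a) * v^2)"
        by (simp add: numeral_2_eq_2 u_def v_def power_one_over)
      moreover have "(1 / (x + a) - 1 / x) + (1 * (1 / (x + a) - 1 / x) + (x + b) * (- (1 / (x + a)^2) - - (1 / x^2)))
         = (v - u) + ((v - u) + (x + b) * (- (v^2) + u^2))"
        by (simp add: u_def v_def power_one_over)
      moreover have "(v - u) + ((v - u) + (x + b) * (- (v^2) + u^2)) = (v - u) + (b * u^2 - (b - a) * v^2)"
        using hu hv by algebra
      ultimately show ?thesis by simp
    qed
    ultimately show ?thesis using Suc 0 by (simp add: numeral_2_eq_2)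
  next
    case (Suc n)
    have d1: "((\<lambda>y. 1 / (y + a) ^ (n+1)) has_real_derivative (- real (n+1) * (1 / (x + a) ^ Suc (n+1)))) (at x)"
      by (rule inv_pow_deriv) (use assms in simp)
    have d2: "((\<lambda>y. 1 / (y + 0) ^ (n+1)) has_real_derivative (- real (n+1) * (1 / (x + 0) ^ Suc (n+1)))) (at x)"
      by (rule inv_pow_deriv) (use assms in simp)
    have d3: "((\<lambda>y. 1 / (y + a) ^ (n+2)) has_real_derivative (- real (n+2) * (1 / (x + a) ^ Suc (n+2)))) (at x)"
      by (rule inv_pow_deriv) (use assms in simp)
    have d4: "((\<lambda>y. 1 / (y + 0) ^ (n+2)) has_real_derivative (- real (n+2) * (1 / (x + 0) ^ Suc (n+2)))) (at x)"
      by (rule inv_pow_deriv) (use assms in simp)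
    have D: "((\<lambda>x. (-1)^n * fact n * (1 / (x + a) ^ (n+1) - 1 / (x + 0) ^ (n+1))
     + (-1)^n * fact (Suc n) * (b * (1 / (x + 0) ^ (n+2)) - (b - a) * (1 / (x + a) ^ (n+2))))
      has_real_derivative
      (-1)^n * fact n * ((- real (n+1) * (1 / (x + a) ^ Suc (n+1))) - (- real (n+1) * (1 / (x + 0) ^ Suc (n+1))))
     + (-1)^n * fact (Suc n) * (b * (- real (n+2) * (1 / (x + 0) ^ Suc (n+2))) - (b - a) * (- real (n+2) * (1 / (x + a) ^ Suc (n+2))))) (at x)"
      by (intro DERIV_add DERIV_cmult DERIV_diff d1 d2 d3 d4)
    have eq: "(-1)^n * fact n * ((- real (n+1) * (1 / (x + a) ^ Suc (n+1))) - (- real (n+1) * (1 / (x + 0) ^ Suc (n+1))))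
     + (-1)^n * fact (Suc n) * (b * (- real (n+2) * (1 / (x + 0) ^ Suc (n+2))) - (b - a) * (- real (n+2) * (1 / (x + a) ^ Suc (n+2))))
     = E a b (Suc (Suc (Suc n))) x"
      unfolding eq_aux by simp
    show ?thesis using D unfolding eq using Suc \<open>k = Suc j\<close> by simp
  qed
qed
qed




lemma lnt_deriv:
  fixes a x :: real
  assumes "x \<noteq> 0" "x + a \<noteq> 0" "1 + a / x > 0"
  shows "((\<lambda>y. ln (1 + a / y)) has_real_derivative (1 / (x + a) - 1 / x)) (at x)"
proof -
  have h0: "((\<lambda>y. 1 + a / y) has_real_derivative (- a / x^2)) (at x)"
    by (rule DERIV_cong, (rule derivative_eq_intros refl)+) (use assms in \<open>simp_all add: power2_eq_square\<close>)
  have "((\<lambda>y. ln (1 + a / y)) has_real_derivative (1 / (1 + a/x)) * (- a / x^2)) (at x)"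
    by (rule DERIV_chain2[OF DERIV_ln_divide h0]) (use assms in simp)
  moreover have "(1 / (1 + a/x)) * (- a / x^2) = 1 / (x + a) - 1 / x"
    using assms by (simp add: field_simps power2_eq_square)
  ultimately show ?thesis by simp
qed

inductive_set Cls :: "real \<Rightarrow> real \<Rightarrow> (real \<Rightarrow> real) set" for a b where
  cconst: "(\<lambda>x. c) \<in> Cls a b"
| cid: "(\<lambda>x. x) \<in> Cls a b"
| cinv0: "(\<lambda>x. 1 / x) \<in> Cls a b"
| cinva: "(\<lambda>x. 1 / (x + a)) \<in> Cls a b"
| clnt: "(\<lambda>x. ln (1 + a / x)) \<in> Cls a b"
| cF: "F a b \<in> Cls a b"
| cFi: "(\<lambda>x. 1 / F a b x) \<in> Cls a b"
| cadd: "f \<in> Cls a b \<Longrightarrow> g \<in> Cls a b \<Longrightarrow> (\<lambda>x. f x + g x) \<in> Cls a b"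
| cmult: "f \<in> Cls a b \<Longrightarrow> g \<in> Cls a b \<Longrightarrow> (\<lambda>x. f x * g x) \<in> Cls a b"

definition dom_ok :: "real \<Rightarrow> real \<Rightarrow> bool" where
  "dom_ok a x \<longleftrightarrow> x \<noteq> 0 \<and> x + a \<noteq> 0 \<and> 1 + a / x > 0"

definition gp :: "real \<Rightarrow> real \<Rightarrow> real \<Rightarrow> real" where
  "gp a b = (\<lambda>x. ln (1 + a / x) + ((x + b) * (1 / (x + a) + (-1) * (1 / x))))"

lemma gp_Cls: "gp a b \<in> Cls a b"
  unfolding gp_def by (intro Cls.intros)

lemma F_pos: "dom_ok a x \<Longrightarrow> F a b x > 0"
  by (simp add: F_def dom_ok_def)

lemma F_deriv:
  assumes "dom_ok a x"
  shows "(F a b has_real_derivative F a b x * gp a b x) (at x)"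
proof -
  have d: "x \<noteq> 0" "x + a \<noteq> 0" "1 + a / x > 0" using assms by (auto simp: dom_ok_def)
  have h0: "((\<lambda>y. 1 + a / y) has_real_derivative (- a / x^2)) (at x)"
    by (rule DERIV_cong, (rule derivative_eq_intros refl)+) (use d in \<open>simp_all add: power2_eq_square\<close>)
  have h1: "((\<lambda>y. y + b) has_real_derivative 1) (at x)" by (auto intro!: derivative_eq_intros)
  have "((\<lambda>y. (1 + a / y) powr (y + b)) has_real_derivative
     ((1 + a / x) powr (x + b)) * (1 * ln (1 + a / x) + (- a / x^2) * (x + b) / (1 + a / x))) (at x)"
    by (rule DERIV_powr[OF h0 d(3) h1])
  note D = this
  have eq: "(- a / x^2) * (x + b) / (1 + a / x) = (x + b) * (1 / (x + a) + (-1) * (1 / x))"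
  proof -
    have e: "(1 / (1 + a/x)) * (- a / x^2) = 1 / (x + a) - 1 / x"
      using d by (simp add: field_simps power2_eq_square)
    have "(- a / x^2) * (x + b) / (1 + a / x) = (x + b) * ((1 / (1 + a/x)) * (- a / x^2))" by (simp add: mult.commute)
    also have "\<dots> = (x + b) * (1 / (x + a) + (-1) * (1 / x))" by (subst e) simp
    finally show ?thesis .
  qed
  show ?thesis unfolding F_def[abs_def] gp_def
    by (rule DERIV_cong[OF D]) (simp only: eq mult_1_left)
qed

lemma Cls_deriv:
  assumes "f \<in> Cls a b"
  shows "\<exists>f' \<in> Cls a b. \<forall>x. dom_ok a x \<longrightarrow> (f has_real_derivative f' x) (at x)"
  using assms
proof induction
  case (cconst c)
  show ?case by (rule bexI[of _ "\<lambda>x. 0"]) (auto intro: Cls.intros)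
next
  case cid
  show ?case by (rule bexI[of _ "\<lambda>x. 1"]) (auto intro: Cls.intros)
next
  case cinv0
  show ?case
  proof (rule bexI[of _ "\<lambda>x. (-1) * ((1 / x) * (1 / x))"], intro allI impI)
    fix x assume "dom_ok a x"
    then have "x + 0 \<noteq> 0" by (simp add: dom_ok_def)
    from inv_pow_deriv[OF this, of 1] show "((\<lambda>x. 1 / x) has_real_derivative (-1) * ((1 / x) * (1 / x))) (at x)"
      by simp
  qed (intro Cls.intros)
next
  case cinva
  show ?case
  proof (rule bexI[of _ "\<lambda>x. (-1) * ((1 / (x + a)) * (1 / (x + a)))"], intro allI impI)
    fix x assume "dom_ok a x"
    then have "x + a \<noteq> 0" by (simp add: dom_ok_def)
    from inv_pow_deriv[OF this, of 1] show "((\<lambda>x. 1 / (x + a)) has_real_derivative (-1) * ((1 / (x + a)) * (1 / (x + a)))) (at x)"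
      by simp
  qed (intro Cls.intros)
next
  case clnt
  show ?case
  proof (rule bexI[of _ "\<lambda>x. 1 / (x + a) + (-1) * (1 / x)"], intro allI impI)
    fix x assume "dom_ok a x"
    then show "((\<lambda>x. ln (1 + a / x)) has_real_derivative 1 / (x + a) + (-1) * (1 / x)) (at x)"
      using lnt_deriv[of x a] by (simp add: dom_ok_def)
  qed (intro Cls.intros)
next
  case cF
  show ?case
    by (rule bexI[of _ "\<lambda>x. F a b x * gp a b x"]) (auto intro: Cls.intros gp_Cls F_deriv)
next
  case cFi
  show ?case
  proof (rule bexI[of _ "\<lambda>x. (1 / F a b x) * ((-1) * gp a b x)"], intro allI impI)
    fix x assume dx: "dom_ok a x"
    have d1: "((\<lambda>x. inverse (F a b x)) has_real_derivative - ((F a b x * gp a b x) * inverse (F a b x ^ Suc (Suc 0)))) (at x)"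
      by (rule DERIV_inverse_fun[OF F_deriv[OF dx]]) (use F_pos[OF dx, of b] in simp)
    have eq: "- ((F a b x * gp a b x) * inverse (F a b x ^ Suc (Suc 0))) = inverse (F a b x) * ((-1) * gp a b x)"
      using F_pos[OF dx, of b] by (simp add: field_simps power2_eq_square)
    show "((\<lambda>x. 1 / F a b x) has_real_derivative (1 / F a b x) * ((-1) * gp a b x)) (at x)"
      unfolding divide_inverse mult_1_left by (rule DERIV_cong[OF d1 eq])
  qed (intro Cls.intros gp_Cls)
next
  case (cadd f g)
  then obtain f' g' where "f' \<in> Cls a b" "g' \<in> Cls a b"
    "\<forall>x. dom_ok a x \<longrightarrow> (f has_real_derivative f' x) (at x)"
    "\<forall>x. dom_ok a x \<longrightarrow> (g has_real_derivative g' x) (at x)" by blast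
  then show ?case
    by (intro bexI[of _ "\<lambda>x. f' x + g' x"]) (auto intro: Cls.intros DERIV_add)
next
  case (cmult f g)
  then obtain f' g' where "f' \<in> Cls a b" "g' \<in> Cls a b"
    "\<forall>x. dom_ok a x \<longrightarrow> (f has_real_derivative f' x) (at x)"
    "\<forall>x. dom_ok a x \<longrightarrow> (g has_real_derivative g' x) (at x)" by blast
  then show ?case
    by (intro bexI[of _ "\<lambda>x. f x * g' x + f' x * g x"]) (auto intro!: Cls.intros DERIV_mult' \<open>f \<in> Cls a b\<close> \<open>g \<in> Cls a b\<close>)
qed

lemma Cls_iter:
  assumes "open S" "\<forall>x\<in>S. dom_ok a x" "f \<in> Cls a b"
  shows "\<exists>h \<in> Cls a b. \<forall>x\<in>S. (deriv ^^ k) f x = h x"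
proof (induction k)
  case 0 then show ?case using assms(3) by auto
next
  case (Suc k)
  then obtain h where h: "h \<in> Cls a b" "\<forall>x\<in>S. (deriv ^^ k) f x = h x" by blast
  obtain h' where h': "h' \<in> Cls a b" "\<forall>x. dom_ok a x \<longrightarrow> (h has_real_derivative h' x) (at x)"
    using Cls_deriv[OF h(1)] by blast
  have "\<forall>x\<in>S. (deriv ^^ Suc k) f x = h' x"
  proof
    fix x assume x: "x \<in> S"
    have ev: "eventually (\<lambda>y. (deriv ^^ k) f y = h y) (nhds x)"
      using eventually_nhds_in_open[OF assms(1) x] by (rule eventually_mono) (use h in auto)
    have "(deriv ^^ Suc k) f x = deriv ((deriv ^^ k) f) x" by simp
    also have "\<dots> = deriv h x" by (rule deriv_cong_ev[OF ev refl])
    also have "\<dots> = h' x" by (rule DERIV_imp_deriv) (use h' assms(2) x in auto)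
    finally show "(deriv ^^ Suc k) f x = h' x" .
  qed
  then show ?case using h' by blast
qed

lemma Cls_smooth:
  assumes "open S" "\<forall>x\<in>S. dom_ok a x" "f \<in> Cls a b"
  shows "smooth_on f S"
  unfolding smooth_on_def
proof (intro allI ballI)
  fix k x assume x: "x \<in> S"
  obtain h where h: "h \<in> Cls a b" "\<forall>x\<in>S. (deriv ^^ k) f x = h x" using Cls_iter[OF assms] by blast
  obtain h' where h': "\<forall>x. dom_ok a x \<longrightarrow> (h has_real_derivative h' x) (at x)"
    using Cls_deriv[OF h(1)] by blast
  have "(h has_real_derivative h' x) (at x)" using h' assms(2) x by auto
  then have "((deriv ^^ k) f has_real_derivative h' x) (at x)"
    by (rule has_field_derivative_transform_within_open[OF _ assms(1) x]) (use h in auto)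
  then show "(deriv ^^ k) f differentiable at x"
    using real_differentiable_def by blast
qed




lemma pow_diff_lower:
  fixes y z :: real
  assumes "0 \<le> y" "y \<le> z"
  shows "real (Suc n) * (z - y) * y^n \<le> z^Suc n - y^Suc n"
proof -
  have "real (Suc n) * y^n \<le> (\<Sum>p<Suc n. z^p * y^(n-p))"
  proof -
    have "(\<Sum>p<Suc n. y^n) \<le> (\<Sum>p<Suc n. z^p * y^(n-p))"
    proof (rule sum_mono)
      fix p assume "p \<in> {..<Suc n}"
      then have "y^n = y^p * y^(n-p)" by (simp add: power_add[symmetric])
      also have "\<dots> \<le> z^p * y^(n-p)" using assms by (intro mult_right_mono power_mono) auto
      finally show "y^n \<le> z^p * y^(n-p)" .
    qed
    then show ?thesis by simp
  qed
  then have "(z - y) * (real (Suc n) * y^n) \<le> (z - y) * (\<Sum>p<Suc n. z^p * y^(n-p))"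
    using assms by (intro mult_left_mono) auto
  moreover have "z^Suc n - y^Suc n = (z - y) * (\<Sum>p<Suc n. z^p * y^(n-p))" by (rule diff_power_eq_sum)
  moreover have "real (Suc n) * (z - y) * y^n = (z - y) * (real (Suc n) * y^n)" by (simp only: mult_ac)
  ultimately show ?thesis by linarith
qed

lemma pow_diff_upper:
  fixes y z :: real
  assumes "0 \<le> y" "y \<le> z"
  shows "z^Suc n - y^Suc n \<le> real (Suc n) * (z - y) * z^n"
proof -
  have "(\<Sum>p<Suc n. z^p * y^(n-p)) \<le> real (Suc n) * z^n"
  proof -
    have "(\<Sum>p<Suc n. z^p * y^(n-p)) \<le> (\<Sum>p<Suc n. z^n)"
    proof (rule sum_mono)
      fix p assume "p \<in> {..<Suc n}"
      then have "z^n = z^p * z^(n-p)" by (simp add: power_add[symmetric])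
      moreover have "z^p * y^(n-p) \<le> z^p * z^(n-p)" using assms by (intro mult_left_mono power_mono) auto
      ultimately show "z^p * y^(n-p) \<le> z^n" by simp
    qed
    then show ?thesis by simp
  qed
  then have "(z - y) * (\<Sum>p<Suc n. z^p * y^(n-p)) \<le> (z - y) * (real (Suc n) * z^n)"
    using assms by (intro mult_left_mono) auto
  moreover have "z^Suc n - y^Suc n = (z - y) * (\<Sum>p<Suc n. z^p * y^(n-p))" by (rule diff_power_eq_sum)
  moreover have "real (Suc n) * (z - y) * z^n = (z - y) * (real (Suc n) * z^n)" by (simp only: mult_ac)
  ultimately show ?thesis by linarith
qed

lemma key_ineq:
  fixes p q :: real
  assumes "0 \<le> p" "p \<le> q"
  shows "2 * p * q * (q^N - p^N) \<le> real N * (q - p) * (q^Suc N + p^Suc N)"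
proof (cases N)
  case 0 then show ?thesis by simp
next
  case (Suc n)
  define g where "g = (\<lambda>j. q^(j+1) * p^(N-j))"
  have "q^N - p^N = (q - p) * (\<Sum>j<N. q^j * p^(n-j))"
    using Suc diff_power_eq_sum[of q n p] by simp
  then have e1: "2 * p * q * (q^N - p^N) = (q - p) * (\<Sum>j<N. 2 * g j)"
  proof -
    assume h: "q^N - p^N = (q - p) * (\<Sum>j<N. q^j * p^(n-j))"
    have "\<And>j. j < N \<Longrightarrow> p * q * (q^j * p^(n-j)) = g j"
    proof -
      fix j assume "j < N"
      then have "N - j = Suc (n - j)" using Suc by simp
      then show "p * q * (q^j * p^(n-j)) = g j" unfolding g_def by (simp add: mult_ac)
    qed
    then have pq: "p * q * (\<Sum>j<N. q^j * p^(n-j)) = (\<Sum>j<N. g j)"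
      by (simp add: sum_distrib_left)
    have "2 * p * q * (q^N - p^N) = (q - p) * (2 * (p * q * (\<Sum>j<N. q^j * p^(n-j))))"
      unfolding h by (simp only: mult_ac)
    also have "\<dots> = (q - p) * (2 * (\<Sum>j<N. g j))" by (simp only: pq)
    also have "\<dots> = (q - p) * (\<Sum>j<N. 2 * g j)" by (simp add: sum_distrib_left)
    finally show ?thesis .
  qed
  have e2: "(\<Sum>j<N. 2 * g j) = (\<Sum>j<N. g j + g (N - Suc j))"
    by (simp add: sum.distrib sum.nat_diff_reindex sum_distrib_left)
  have b: "g j + g (N - Suc j) \<le> q^Suc N + p^Suc N" if j: "j < N" for j
  proof -
    have m1: "p^(j+1) \<le> q^(j+1)" by (rule power_mono) (use assms in auto)
    have m2: "p^(N-j) \<le> q^(N-j)" by (rule power_mono) (use assms in auto)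
    have "0 \<le> (q^(j+1) - p^(j+1)) * (q^(N-j) - p^(N-j))"
      using m1 m2 by (intro mult_nonneg_nonneg) auto
    moreover have "q^(j+1) * q^(N-j) = q^Suc N" "p^(j+1) * p^(N-j) = p^Suc N"
      using j by (simp_all add: power_add[symmetric])
    moreover have "g (N - Suc j) = q^(N-j) * p^(j+1)"
    proof -
      have e: "N - Suc j + 1 = N - j" "N - (N - Suc j) = j + 1" using j by auto
      show ?thesis unfolding g_def by (simp only: e)
    qed
    moreover have "g j = q^(j+1) * p^(N-j)" by (simp add: g_def)
    moreover have "(q^(j+1) - p^(j+1)) * (q^(N-j) - p^(N-j)) =
       q^(j+1) * q^(N-j) - q^(j+1) * p^(N-j) - q^(N-j) * p^(j+1) + p^(j+1) * p^(N-j)"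
      by (simp add: algebra_simps)
    ultimately show ?thesis by linarith
  qed
  have "(\<Sum>j<N. 2 * g j) \<le> real N * (q^Suc N + p^Suc N)"
    unfolding e2 using sum_mono[OF b, of "{..<N}"] by simp
  then have "(q - p) * (\<Sum>j<N. 2 * g j) \<le> (q - p) * (real N * (q^Suc N + p^Suc N))"
    using assms by (intro mult_left_mono) auto
  then show ?thesis using e1 by (simp add: mult_ac)
qed




definition R :: "nat \<Rightarrow> real \<Rightarrow> real \<Rightarrow> real \<Rightarrow> real" where
  "R n p q b = p^(n+2)*q - p*q^(n+2) + real (n+1) * b * (q^(n+2) - p^(n+2)) + real (n+1) * (q - p) * p^(n+2)"

lemma R_alt: "R n p q b = p*q*(p^(n+1) - q^(n+1)) + real (n+1) * b * (q*q^(n+1) - p*p^(n+1)) + real (n+1) * (q - p) * (p*p^(n+1))"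
  unfolding R_def by (simp add: algebra_simps)

lemma R1:
  assumes "0 < q" "q < p" "b \<le> q - p"
  shows "R n p q b \<ge> 0"
proof -
  define N where "N = real (n+1)"
  define A where "A = p^(n+1)"
  define B where "B = q^(n+1)"
  have N0: "N \<ge> 0" by (simp add: N_def)
  have BA: "B \<le> A" unfolding A_def B_def by (rule power_mono) (use assms in auto)
  have qBpA: "q * B \<le> p * A" using BA assms by (intro mult_mono) (auto simp: B_def)
  have t0: "N * (b - (q - p)) \<le> 0" using N0 assms by (intro mult_nonneg_nonpos) auto
  have t1: "N * (b - (q - p)) * (q * B - p * A) \<ge> 0"
    using t0 qBpA by (rule_tac mult_nonpos_nonpos) auto
  have low: "A - B \<ge> N * (p - q) * q^n"
    using pow_diff_lower[of q p n] assms by (simp add: A_def B_def N_def)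
  have t2: "p * q * (A - B) \<ge> p * q * (N * (p - q) * q^n)"
    using low assms by (intro mult_left_mono) auto
  have Bq: "B = q * q^n" by (simp add: B_def)
  have t3: "N * (p - q) * (p - q) * q * q^n \<ge> 0"
    using N0 assms by (intro mult_nonneg_nonneg) auto
  have eqR: "R n p q b = p * q * (A - B) - N * (p - q) * q * B + N * (b - (q - p)) * (q * B - p * A)"
    unfolding R_alt A_def B_def N_def by (simp add: algebra_simps)
  have eq2: "p * q * (N * (p - q) * q^n) - N * (p - q) * q * (q * q^n) = N * (p - q) * (p - q) * q * q^n"
    by (simp add: algebra_simps)
  show ?thesis using t1 t2 t3 eqR eq2 Bq by simp
qed

lemma R4:
  assumes "0 < p" "p < q" "b \<le> 0"
  shows "R n p q b \<le> 0"
proof -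
  define N where "N = real (n+1)"
  define A where "A = p^(n+1)"
  define B where "B = q^(n+1)"
  have N0: "N \<ge> 0" by (simp add: N_def)
  have AB: "A \<le> B" unfolding A_def B_def by (rule power_mono) (use assms in auto)
  have A0: "0 \<le> A" using assms by (simp add: A_def)
  have qBpA: "p * A \<le> q * B" using AB assms A0 by (intro mult_mono) auto
  have t0: "N * b \<le> 0" using N0 assms by (intro mult_nonneg_nonpos) auto
  have t1: "N * b * (q * B - p * A) \<le> 0"
    using t0 qBpA by (rule_tac mult_nonpos_nonneg) auto
  have low: "B - A \<ge> N * (q - p) * p^n"
    using pow_diff_lower[of p q n] assms by (simp add: A_def B_def N_def)
  have t2: "p * q * (B - A) \<ge> p * q * (N * (q - p) * p^n)"
    using low assms by (intro mult_left_mono) auto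
  have Ap: "A = p * p^n" by (simp add: A_def)
  have t3: "N * (q - p) * (q - p) * p * p^n \<ge> 0"
    using N0 assms by (intro mult_nonneg_nonneg) auto
  have eqR: "R n p q b = - (p * q * (B - A)) + N * b * (q * B - p * A) + N * (q - p) * (p * A)"
    unfolding R_alt A_def B_def N_def by (simp add: algebra_simps)
  have eq2: "- (p * q * (N * (q - p) * p^n)) + N * (q - p) * (p * (p * p^n)) = - (N * (q - p) * (q - p) * p * p^n)"
    by (simp add: algebra_simps)
  show ?thesis using t1 t2 t3 eqR eq2 Ap by simp
qed

lemma R3:
  assumes "0 < p" "p < q" "2 * b \<ge> q - p"
  shows "R n p q b \<ge> 0"
proof -
  define N where "N = real (n+1)"
  define A where "A = p^(n+1)"
  define B where "B = q^(n+1)"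
  have N0: "N \<ge> 0" by (simp add: N_def)
  have AB: "A \<le> B" unfolding A_def B_def by (rule power_mono) (use assms in auto)
  have A0: "0 \<le> A" using assms by (simp add: A_def)
  have qBpA: "p * A \<le> q * B" using AB assms A0 by (intro mult_mono) auto
  have t1: "N * (b - (q - p) / 2) * (q * B - p * A) \<ge> 0"
    using N0 assms qBpA by (intro mult_nonneg_nonneg) auto
  have k: "2 * p * q * (B - A) \<le> N * (q - p) * (q * B + p * A)"
    using key_ineq[of p q "n+1"] assms by (simp add: A_def B_def N_def)
  have eqR: "R n p q b = p * q * (A - B) + N * (q - p) * (q * B + p * A) / 2 + N * (b - (q - p) / 2) * (q * B - p * A)"
    unfolding R_alt A_def B_def N_def by (simp add: field_simps)
  have e3: "2 * p * q * (B - A) = 2 * (p * q * (B - A))" "p * q * (A - B) = - (p * q * (B - A))" by (simp_all add: algebra_simps)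
  show ?thesis using t1 k eqR e3 by linarith
qed

lemma R2:
  assumes "0 < q" "q < p" "2 * b \<ge> q - p"
  shows "R n p q b \<le> 0"
proof -
  define N where "N = real (n+1)"
  define A where "A = p^(n+1)"
  define B where "B = q^(n+1)"
  have N0: "N \<ge> 0" by (simp add: N_def)
  have BA: "B \<le> A" unfolding A_def B_def by (rule power_mono) (use assms in auto)
  have qBpA: "q * B \<le> p * A" using BA assms by (intro mult_mono) (auto simp: B_def)
  have t1: "N * (b - (q - p) / 2) * (q * B - p * A) \<le> 0"
    using N0 assms qBpA by (intro mult_nonneg_nonpos) auto
  have k: "2 * q * p * (A - B) \<le> N * (p - q) * (p * A + q * B)"
    using key_ineq[of q p "n+1"] assms by (simp add: A_def B_def N_def)
  have eqR: "R n p q b = p * q * (A - B) + N * (q - p) * (q * B + p * A) / 2 + N * (b - (q - p) / 2) * (q * B - p * A)"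
    unfolding R_alt A_def B_def N_def by (simp add: field_simps)
  have e3: "2 * q * p * (A - B) = 2 * (p * q * (A - B))" "N * (p - q) * (p * A + q * B) = - (N * (q - p) * (q * B + p * A))" by (simp_all add: algebra_simps)
  show ?thesis using t1 k eqR e3 by linarith
qed

lemma R_neg: "R n (-p) (-q) (-b) = - ((-1)^n * R n p q b)"
proof -
  have m: "(-1::real)^(n+2) = (-1)^n" by (simp add: power_add)
  have h: "(-p)^(n+2) = (-1)^n * p^(n+2)" "(-q)^(n+2) = (-1)^n * q^(n+2)"
    by (simp_all only: power_minus[of p] power_minus[of q] m)
  have gen: "\<And>s P Q N. (s*P)*(-q) - (-p)*(s*Q) + N*(-b)*(s*Q - s*P) + N*((-q)-(-p))*(s*P)
     = -(s*(P*q - p*Q + N*b*(Q-P) + N*(q-p)*P))"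
    by (simp add: algebra_simps)
  show ?thesis unfolding R_def h by (rule gen)
qed

lemma key_alg:
  fixes p q P Q N b :: real
  assumes "p \<noteq> 0" "q \<noteq> 0" "P \<noteq> 0" "Q \<noteq> 0"
  shows "((1 / Q - 1 / P) + N * (b * (1 / (p * P)) - (b - (q - p)) * (1 / (q * Q)))) * ((p * P) * (q * Q))
     = (p * P) * q - p * (q * Q) + N * b * (q * Q - p * P) + N * (q - p) * (p * P)"
  using assms by (simp add: field_simps)

lemma E_R:
  assumes "x \<noteq> 0" "x + a \<noteq> 0"
  shows "E a b (Suc (Suc n)) x * (x * (x + a))^(n+2) = (-1)^n * fact n * R n x (x + a) b"
proof -
  define p where "p = x"
  define q where "q = x + a"
  have p0: "p \<noteq> 0" and q0: "q \<noteq> 0" using assms by (auto simp: p_def q_def)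
  define P where "P = p^(n+1)"
  define Q where "Q = q^(n+1)"
  have P0: "P \<noteq> 0" and Q0: "Q \<noteq> 0" using p0 q0 by (auto simp: P_def Q_def)
  define N where "N = real (n+1)"
  have r1: "(x+0)^(n+1) = P" "(x+a)^(n+1) = Q" "(x+0)^(n+2) = p*P" "(x+a)^(n+2) = q*Q"
      "fact (Suc n) = N * fact n" "b - a = b - (q-p)"
    by (simp_all add: p_def q_def P_def Q_def N_def fact_Suc)
  have gen2: "s * f * X + s * (N * f) * Y = s * f * (X + N * Y)" for s f X Y N :: real
    by (simp add: algebra_simps)
  have E: "E a b (Suc (Suc n)) x = (-1)^n * fact n * ((1 / Q - 1 / P) + N * (b * (1 / (p * P)) - (b - (q - p)) * (1 / (q * Q))))"
    unfolding E.simps r1 by (rule gen2)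
  have pw: "(x * (x + a))^(n+2) = (p * P) * (q * Q)"
    by (simp add: p_def q_def P_def Q_def power_mult_distrib)
  have Rr: "R n x (x + a) b = (p * P) * q - p * (q * Q) + N * b * (q * Q - p * P) + N * (q - p) * (p * P)"
    by (simp add: R_def p_def q_def P_def Q_def N_def)
  have gen3: "X * Y = Z \<Longrightarrow> s * f * X * Y = s * f * Z" for s f X Y Z :: real
    by (simp add: mult.assoc)
  show ?thesis unfolding E pw Rr by (rule gen3[OF key_alg[OF p0 q0 P0 Q0]])
qed




lemma f_mono_aux:
  fixes y :: real
  assumes "y > 0"
  shows "(y \<ge> 1 \<longrightarrow> ln y \<le> y/2 - 1/(2*y)) \<and> (y \<le> 1 \<longrightarrow> ln y \<ge> y/2 - 1/(2*y))"
proof -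
  define f where "f = (\<lambda>y::real. (1/2) * y - (1/2) * inverse y - ln y)"
  define f' where "f' = (\<lambda>y::real. (y - 1)^2 / (2 * y^2))"
  have D: "(f has_real_derivative f' z) (at z)" if "z > 0" for z
  proof -
    have d1: "((\<lambda>y. (1/2) * y) has_real_derivative (1/2) * 1) (at z)"
      by (rule DERIV_cmult[OF DERIV_ident])
    have d2: "((\<lambda>y. (1/2) * inverse y) has_real_derivative (1/2) * (- (inverse z ^ Suc (Suc 0)))) (at z)"
      by (rule DERIV_cmult[OF DERIV_inverse]) (use that in simp)
    have d3: "(ln has_real_derivative 1 / z) (at z)" by (rule DERIV_ln_divide[OF that])
    have dd: "(f has_real_derivative ((1/2) * 1 - (1/2) * (- (inverse z ^ Suc (Suc 0))) - 1 / z)) (at z)"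
      unfolding f_def by (rule DERIV_diff[OF DERIV_diff[OF d1 d2] d3])
    have ee: "(1/2) * 1 - (1/2) * (- (inverse z ^ Suc (Suc 0))) - 1 / z = f' z"
      unfolding f'_def using that by (simp add: field_simps power2_eq_square)
    show ?thesis by (rule DERIV_cong[OF dd ee])
  qed
  have nn: "f' z \<ge> 0" for z unfolding f'_def by simp
  have f1: "f 1 = 0" by (simp add: f_def)
  have A: "f 1 \<le> f y" if "y \<ge> 1"
  proof (rule deriv_nonneg_imp_mono[of 1 y f f'])
    fix x assume "x \<in> {1..y}" then show "(f has_real_derivative f' x) (at x)" by (intro D) auto
  qed (use nn that in auto)
  have B: "f y \<le> f 1" if "y \<le> 1"
  proof (rule deriv_nonneg_imp_mono[of y 1 f f'])
    fix x assume "x \<in> {y..1}" then show "(f has_real_derivative f' x) (at x)" using assms by (intro D) auto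
  qed (use nn that in auto)
  have e1: "y/2 = (1/2)*y" "1/(2*y) = (1/2)*inverse y" by (simp_all add: inverse_eq_divide)
  have e: "f y = y/2 - 1/(2*y) - ln y" unfolding f_def e1 by (rule refl)
  show ?thesis using A B f1 e by auto
qed
definition G :: "real \<Rightarrow> real \<Rightarrow> real" where
  "G y r = ln y - (y - 1) / y - r * (y - 1)^2 / y"

lemma G_mono: "0 < y \<Longrightarrow> r \<le> r' \<Longrightarrow> G y r' \<le> G y r"
  unfolding G_def by (auto intro!: divide_right_mono mult_right_mono)

lemma G1: "0 < y \<Longrightarrow> 1 \<le> r \<Longrightarrow> G y r \<le> 0"
proof -
  assume y: "0 < y" and r: "1 \<le> r"
  have "G y r \<le> G y 1" by (rule G_mono[OF y r])
  also have "G y 1 = ln y - (y - 1)" unfolding G_def using y by (simp add: field_simps power2_eq_square)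
  also have "\<dots> \<le> 0" using ln_le_minus_one[OF y] by simp
  finally show ?thesis .
qed

lemma G4: "0 < y \<Longrightarrow> r \<le> 0 \<Longrightarrow> G y r \<ge> 0"
proof -
  assume y: "0 < y" and r: "r \<le> 0"
  have "G y 0 \<le> G y r" by (rule G_mono[OF y r])
  moreover have "G y 0 = ln y - 1 + 1 / y" unfolding G_def using y by (simp add: field_simps)
  moreover have "ln (1/y) \<le> 1/y - 1" using ln_le_minus_one[of "1/y"] y by simp
  moreover have "ln (1/y) = - ln y" using y by (simp add: ln_div)
  ultimately show ?thesis by linarith
qed

lemma G_half: "0 < y \<Longrightarrow> G y (1/2) = ln y - (y/2 - 1/(2*y))"
  unfolding G_def by (simp add: field_simps power2_eq_square)

lemma G2: "0 < y \<Longrightarrow> y \<le> 1 \<Longrightarrow> r \<le> 1/2 \<Longrightarrow> G y r \<ge> 0"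
proof -
  assume y: "0 < y" "y \<le> 1" and r: "r \<le> 1/2"
  have "G y (1/2) \<le> G y r" by (rule G_mono[OF y(1) r])
  moreover have "G y (1/2) \<ge> 0" using G_half[OF y(1)] f_mono_aux[OF y(1)] y by simp
  ultimately show ?thesis by linarith
qed

lemma G3: "0 < y \<Longrightarrow> 1 \<le> y \<Longrightarrow> 1/2 \<le> r \<Longrightarrow> G y r \<le> 0"
proof -
  assume y: "0 < y" "1 \<le> y" and r: "1/2 \<le> r"
  have "G y r \<le> G y (1/2)" by (rule G_mono[OF y(1) r])
  moreover have "G y (1/2) \<le> 0" using G_half[OF y(1)] f_mono_aux[OF y(1)] y by simp
  ultimately show ?thesis by linarith
qed

lemma E1_G:
  assumes "dom_ok a x" "a \<noteq> 0"
  shows "E a b 1 x = G (1 + a / x) (b / a)"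
proof -
  have d: "x \<noteq> 0" "x + a \<noteq> 0" "1 + a / x > 0" using assms(1) by (auto simp: dom_ok_def)
  have "(x + b) * (1 / (x + a) - 1 / x) = - ((1 + a/x) - 1) / (1 + a/x) - (b/a) * ((1 + a/x) - 1)^2 / (1 + a/x)"
  proof -
    define y where "y = 1 + a / x"
    have y0: "y \<noteq> 0" using d y_def by simp
    have xa: "x + a = x * y" using d(1) y_def by (simp add: field_simps)
    have ha: "a = x * (y - 1)" using d(1) y_def by (simp add: field_simps)
    have y1: "y - 1 \<noteq> 0" using ha assms(2) by auto
    have "(x + b) * (1 / (x * y) - 1 / x) = - (y - 1) / y - (b / (x * (y - 1))) * (y - 1)^2 / y"
      using d(1) y0 y1 by (simp add: field_simps power2_eq_square)
    then show ?thesis unfolding y_def[symmetric] using xa ha by simp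
  qed
  then show ?thesis by (simp add: G_def)
qed

lemma dom_W: "dom_ok a x \<Longrightarrow> x * (x + a) > 0"
proof -
  assume "dom_ok a x"
  then have "x \<noteq> 0" "1 + a / x > 0" by (auto simp: dom_ok_def)
  moreover have "x * (x + a) = x^2 * (1 + a / x)" using \<open>x \<noteq> 0\<close> by (simp add: field_simps power2_eq_square)
  ultimately show ?thesis by simp
qed

lemma E2_L: "dom_ok a x \<Longrightarrow> E a b 2 x * (x * (x + a))^2 = a * ((2*b - a) * x + a * b)"
proof -
  assume d: "dom_ok a x"
  have "E a b (Suc (Suc 0)) x * (x * (x + a))^(0+2) = (-1)^0 * fact 0 * R 0 x (x + a) b"
    by (rule E_R) (use d in \<open>auto simp: dom_ok_def\<close>)
  then show ?thesis by (simp add: R_def numeral_2_eq_2 algebra_simps)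
qed

lemma lnF_iter:
  assumes "open I" "\<forall>x\<in>I. dom_ok a x" "x \<in> I"
  shows "(deriv ^^ k) (\<lambda>y. ln (F a b y)) x = 1 * E a b k x"
  using iter_deriv_eq[of I "\<lambda>y. ln (F a b y)" "E a b", OF assms(1) _ _ assms(3)] assms
  by (auto simp: F_def dom_ok_def E_deriv)

lemma lnFi_iter:
  assumes "open I" "\<forall>x\<in>I. dom_ok a x" "x \<in> I"
  shows "(deriv ^^ k) (\<lambda>y. ln (1 / F a b y)) x = -1 * E a b k x"
proof -
  have "(deriv ^^ k) (\<lambda>y. ln (1 / F a b y)) x = (\<lambda>x. - E a b k x) x"
  proof (rule iter_deriv_eq[of I _ "\<lambda>k x. - E a b k x", OF assms(1) _ _ assms(3)])
    fix y assume y: "y \<in> I"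
    then have "F a b y > 0" using assms(2) F_pos by blast
    then show "ln (1 / F a b y) = - E a b 0 y"
      using y assms(2) by (simp add: ln_div F_def dom_ok_def)
  next
    fix k y assume y: "y \<in> I"
    show "((\<lambda>x. - E a b k x) has_real_derivative - E a b (Suc k) y) (at y)"
      by (rule DERIV_minus) (use E_deriv y assms(2) in \<open>auto simp: dom_ok_def\<close>)
  qed
  then show ?thesis by simp
qed




lemma pos_of_mult: "(W::real) > 0 \<Longrightarrow> X * W = Y \<Longrightarrow> Y \<ge> 0 \<Longrightarrow> X \<ge> 0"
  by (metis linorder_not_le mult_neg_pos)

lemma CL_suff:
  fixes \<Phi> :: "real \<Rightarrow> real" and s :: real
  assumes I: "open I" "\<forall>x\<in>I. dom_ok a x"
    and pos: "\<forall>x\<in>I. \<Phi> x > 0" and cls: "\<Phi> \<in> Cls a b"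
    and it: "\<And>k x. x \<in> I \<Longrightarrow> (deriv ^^ k) (\<lambda>y. ln (\<Phi> y)) x = s * E a b k x"
    and k1: "\<forall>x\<in>I. s * E a b 1 x \<le> 0"
    and kn: "\<And>n x. x \<in> I \<Longrightarrow> s * R n x (x + a) b \<ge> 0"
  shows "log_completely_monotonic_on \<Phi> I"
  unfolding log_completely_monotonic_on_def
proof (intro conjI allI impI ballI)
  show "\<And>x. x \<in> I \<Longrightarrow> 0 < \<Phi> x" using pos by blast
  show "smooth_on \<Phi> I" by (rule Cls_smooth[OF I cls])
next
  fix k :: nat and x assume k: "1 \<le> k" and x: "x \<in> I"
  show "0 \<le> (-1) ^ k * (deriv ^^ k) (\<lambda>y. ln (\<Phi> y)) x"
  proof (cases k)
    case 0 then show ?thesis using k by simp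
  next
    case (Suc j)
    show ?thesis
    proof (cases j)
      case 0 then show ?thesis using Suc it[OF x, of "Suc 0"] k1 x by simp
    next
      case (Suc n)
      have d: "x \<noteq> 0" "x + a \<noteq> 0" using I(2) x by (auto simp: dom_ok_def)
      have ER: "E a b (Suc (Suc n)) x * (x * (x + a))^(n+2) = (-1)^n * fact n * R n x (x + a) b"
        by (rule E_R[OF d])
      have W: "(x * (x + a))^(n+2) > 0" using dom_W I(2) x by (intro zero_less_power) blast
      have "((-1)^n * (s * E a b (Suc (Suc n)) x)) * (x * (x + a))^(n+2) = ((-1)^n * (-1)^n) * fact n * (s * R n x (x + a) b)"
        using ER by (simp only: mult_ac)
      also have "\<dots> = fact n * (s * R n x (x + a) b)" by simp
      finally have eq: "((-1)^n * (s * E a b (Suc (Suc n)) x)) * (x * (x + a))^(n+2) = fact n * (s * R n x (x + a) b)" .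
      have "fact n * (s * R n x (x + a) b) \<ge> 0" using kn[OF x] by simp
      then have "(-1)^n * (s * E a b (Suc (Suc n)) x) \<ge> 0" using pos_of_mult[OF W eq] by simp
      moreover have hk: "k = Suc (Suc n)" using \<open>k = Suc j\<close> Suc by simp
      ultimately show ?thesis unfolding hk it[OF x] by (simp del: E.simps)
    qed
  qed
qed

lemma AL_suff:
  fixes \<Phi> :: "real \<Rightarrow> real" and s :: real
  assumes I: "open I" "\<forall>x\<in>I. dom_ok a x"
    and pos: "\<forall>x\<in>I. \<Phi> x > 0" and cls: "\<Phi> \<in> Cls a b"
    and it: "\<And>k x. x \<in> I \<Longrightarrow> (deriv ^^ k) (\<lambda>y. ln (\<Phi> y)) x = s * E a b k x"
    and k1: "\<forall>x\<in>I. s * E a b 1 x \<ge> 0"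
    and kn: "\<And>n x. x \<in> I \<Longrightarrow> s * R n (-x) (-(x + a)) (-b) \<le> 0"
  shows "log_absolutely_monotonic_on \<Phi> I"
  unfolding log_absolutely_monotonic_on_def
proof (intro conjI allI impI ballI)
  show "\<And>x. x \<in> I \<Longrightarrow> 0 < \<Phi> x" using pos by blast
  show "smooth_on \<Phi> I" by (rule Cls_smooth[OF I cls])
next
  fix k :: nat and x assume k: "1 \<le> k" and x: "x \<in> I"
  show "0 \<le> (deriv ^^ k) (\<lambda>y. ln (\<Phi> y)) x"
  proof (cases k)
    case 0 then show ?thesis using k by simp
  next
    case (Suc j)
    show ?thesis
    proof (cases j)
      case 0 then show ?thesis using Suc it[OF x, of "Suc 0"] k1 x by simp
    next
      case (Suc n)
      have d: "x \<noteq> 0" "x + a \<noteq> 0" using I(2) x by (auto simp: dom_ok_def)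
      have ER: "E a b (Suc (Suc n)) x * (x * (x + a))^(n+2) = (-1)^n * fact n * R n x (x + a) b"
        by (rule E_R[OF d])
      have RN: "R n x (x + a) b = - ((-1)^n * R n (-x) (-(x + a)) (-b))"
        using R_neg[of n "-x" "-(x+a)" "-b"] by (simp only: minus_minus)
      have W: "(x * (x + a))^(n+2) > 0" using dom_W I(2) x by (intro zero_less_power) blast
      have "(s * E a b (Suc (Suc n)) x) * (x * (x + a))^(n+2) = ((-1)^n * (-1)^n) * fact n * (- (s * R n (-x) (-(x + a)) (-b)))"
        using ER unfolding RN by (simp only: mult_ac mult_minus_right)
      also have "\<dots> = fact n * (- (s * R n (-x) (-(x + a)) (-b)))" by simp
      finally have eq: "(s * E a b (Suc (Suc n)) x) * (x * (x + a))^(n+2) = fact n * (- (s * R n (-x) (-(x + a)) (-b)))" .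
      have "fact n * (- (s * R n (-x) (-(x + a)) (-b))) \<ge> 0" using kn[OF x, of n] by (intro mult_nonneg_nonneg) auto
      then have "s * E a b (Suc (Suc n)) x \<ge> 0" using pos_of_mult[OF W eq] by simp
      moreover have hk: "k = Suc (Suc n)" using \<open>k = Suc j\<close> Suc by simp
      ultimately show ?thesis unfolding hk it[OF x] by (simp del: E.simps)
    qed
  qed
qed

lemma nec_E2:
  assumes "\<forall>x\<in>I. dom_ok a x" "x \<in> I" "s * E a b 2 x \<ge> 0"
  shows "s * (a * ((2*b - a) * x + a * b)) \<ge> 0"
proof -
  have dx: "dom_ok a x" using assms by blast
  have W: "(x * (x + a))^2 > 0" using dom_W[OF dx] by (rule zero_less_power)
  have e: "s * E a b 2 x * (x * (x + a))^2 = s * (a * ((2*b - a) * x + a * b))"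
    using E2_L[OF dx, of b] by (simp add: mult.assoc)
  have g: "s * E a b 2 x * (x * (x + a))^2 \<ge> 0" using W assms(3) by simp
  show ?thesis using e g by linarith
qed

lemma CL_nec:
  assumes "log_completely_monotonic_on \<Phi> I" "\<forall>x\<in>I. dom_ok a x"
    "\<And>k x. x \<in> I \<Longrightarrow> (deriv ^^ k) (\<lambda>y. ln (\<Phi> y)) x = s * E a b k x"
  shows "\<forall>x\<in>I. s * (a * ((2*b - a) * x + a * b)) \<ge> 0"
proof
  fix x assume x: "x \<in> I"
  have h: "\<forall>k::nat. k \<ge> 1 \<longrightarrow> (\<forall>x\<in>I. (-1) ^ k * (deriv ^^ k) (\<lambda>y. ln (\<Phi> y)) x \<ge> 0)"
    using assms(1) unfolding log_completely_monotonic_on_def by blast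
  have "0 \<le> (-1)^2 * (deriv ^^ 2) (\<lambda>y. ln (\<Phi> y)) x"
    using h[rule_format, of 2 x] x by simp
  then have "s * E a b 2 x \<ge> 0" using assms(3)[OF x] by simp
  then show "s * (a * ((2*b - a) * x + a * b)) \<ge> 0" by (rule nec_E2[OF assms(2) x])
qed

lemma AL_nec:
  assumes "log_absolutely_monotonic_on \<Phi> I" "\<forall>x\<in>I. dom_ok a x"
    "\<And>k x. x \<in> I \<Longrightarrow> (deriv ^^ k) (\<lambda>y. ln (\<Phi> y)) x = s * E a b k x"
  shows "\<forall>x\<in>I. s * (a * ((2*b - a) * x + a * b)) \<ge> 0"
proof
  fix x assume x: "x \<in> I"
  have h: "\<forall>k::nat. k \<ge> 1 \<longrightarrow> (\<forall>x\<in>I. (deriv ^^ k) (\<lambda>y. ln (\<Phi> y)) x \<ge> 0)"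
    using assms(1) unfolding log_absolutely_monotonic_on_def by blast
  have "0 \<le> (deriv ^^ 2) (\<lambda>y. ln (\<Phi> y)) x"
    using h[rule_format, of 2 x] x by simp
  then have "s * E a b 2 x \<ge> 0" using assms(3)[OF x] by simp
  then show "s * (a * ((2*b - a) * x + a * b)) \<ge> 0" by (rule nec_E2[OF assms(2) x])
qed

lemma lin_right:
  fixes m c x0 :: real
  assumes "m * x0 + c > 0"
  shows "\<exists>x>x0. m * x + c > 0"
proof -
  define c0 where "c0 = m * x0 + c"
  define d where "d = c0 / (2 * (\<bar>m\<bar> + 1))"
  have d0: "d > 0" using assms by (simp add: d_def c0_def)
  have "\<bar>m * d\<bar> \<le> c0 / 2"
  proof -
    have "\<bar>m * d\<bar> = \<bar>m\<bar> * d" using d0 by (simp add: abs_mult)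
    also have "\<dots> = c0 * (\<bar>m\<bar> / (2 * (\<bar>m\<bar> + 1)))" by (simp add: d_def)
    also have "\<dots> \<le> c0 * (1/2)"
      using assms by (intro mult_left_mono) (auto simp: c0_def field_simps)
    finally show ?thesis by simp
  qed
  then have "m * (x0 + d) + c > 0" using assms by (simp add: c0_def algebra_simps)
  then show ?thesis using d0 by (intro exI[of _ "x0 + d"]) auto
qed

lemma lin_left:
  fixes m c x0 :: real
  assumes "m * x0 + c > 0"
  shows "\<exists>x<x0. m * x + c > 0"
proof -
  have "(-m) * (-x0) + c > 0" using assms by simp
  from lin_right[OF this] obtain y where "y > -x0" "(-m) * y + c > 0" by blast
  then show ?thesis by (intro exI[of _ "-y"]) auto
qed

lemma inf_right:
  fixes m c M :: real
  assumes "m > 0"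
  shows "\<exists>x>M. m * x + c > 0"
proof -
  define x where "x = \<bar>M\<bar> + \<bar>c\<bar> / m + 1"
  have "m * x = m * \<bar>M\<bar> + \<bar>c\<bar> + m" using assms by (simp add: x_def field_simps)
  moreover have "m * \<bar>M\<bar> \<ge> 0" using assms by simp
  ultimately have "m * x + c > 0" using assms by linarith
  moreover have "x > M"
  proof -
    have "\<bar>c\<bar> / m \<ge> 0" using assms by simp
    then show ?thesis unfolding x_def using abs_ge_self[of M] by linarith
  qed
  ultimately show ?thesis by blast
qed

lemma inf_left:
  fixes m c M :: real
  assumes "m < 0"
  shows "\<exists>x<M. m * x + c > 0"
proof -
  from inf_right[of "-m" "-M" c] assms obtain y where "y > -M" "(-m) * y + c > 0" by auto
  then show ?thesis by (intro exI[of _ "-y"]) auto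
qed




lemma dom_pos: "0 < x \<Longrightarrow> 0 < x + a \<Longrightarrow> dom_ok a x"
proof -
  assume h: "0 < x" "0 < x + a"
  have "1 + a / x = (x + a) / x" using h by (simp add: field_simps)
  then show ?thesis using h by (simp add: dom_ok_def)
qed

lemma dom_neg: "x < 0 \<Longrightarrow> x + a < 0 \<Longrightarrow> dom_ok a x"
proof -
  assume h: "x < 0" "x + a < 0"
  have "1 + a / x = (x + a) / x" using h by (simp add: field_simps)
  moreover have "(x + a) / x > 0" using h by (simp add: divide_neg_neg)
  ultimately show ?thesis using h by (simp add: dom_ok_def)
qed

lemma P1:
  assumes a: "a < 0"
  shows "(log_completely_monotonic_on (F a b) {-a<..} \<longleftrightarrow> b \<le> a) \<and>
         (log_completely_monotonic_on (\<lambda>x. 1 / F a b x) {-a<..} \<longleftrightarrow> 2 * b \<ge> a)"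
proof -
  let ?I = "{-a<..}"
  have op: "open ?I" by simp
  have dm: "\<forall>x\<in>?I. dom_ok a x" using a by (auto intro!: dom_pos)
  have it1: "\<And>k x. x \<in> ?I \<Longrightarrow> (deriv ^^ k) (\<lambda>y. ln (F a b y)) x = 1 * E a b k x"
    by (rule lnF_iter[OF op dm])
  have it2: "\<And>k x. x \<in> ?I \<Longrightarrow> (deriv ^^ k) (\<lambda>y. ln (1 / F a b y)) x = -1 * E a b k x"
    by (rule lnFi_iter[OF op dm])
  have posF: "\<forall>x\<in>?I. F a b x > 0" using dm F_pos by blast
  have posFi: "\<forall>x\<in>?I. 1 / F a b x > 0" using posF by simp
  have yv: "0 < 1 + a / x" "1 + a / x \<le> 1" if "x \<in> ?I" for x
    using that a dm by (auto simp: dom_ok_def divide_nonpos_pos)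
  have A: "log_completely_monotonic_on (F a b) ?I \<longleftrightarrow> b \<le> a"
  proof
    assume h: "log_completely_monotonic_on (F a b) ?I"
    have N: "\<forall>x\<in>?I. 1 * (a * ((2*b - a) * x + a * b)) \<ge> 0" by (rule CL_nec[OF h dm it1])
    show "b \<le> a"
    proof (rule ccontr)
      assume "\<not> b \<le> a"
      have "(2*b - a) * (-a) + a * b = a * (a - b)" by (simp add: algebra_simps)
      moreover have "a * (a - b) > 0" using a \<open>\<not> b \<le> a\<close> by (intro mult_neg_neg) auto
      ultimately obtain x where x: "x > -a" "(2*b - a) * x + a * b > 0"
        using lin_right[of "2*b - a" "-a" "a*b"] by auto
      have "a * ((2*b - a) * x + a * b) < 0" using a x(2) by (rule mult_neg_pos)
      moreover have nx: "x \<in> ?I" using x(1) by simp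
      moreover note bspec[OF N nx]
      ultimately show False by linarith
    qed
  next
    assume hb: "b \<le> a"
    show "log_completely_monotonic_on (F a b) ?I"
    proof (rule CL_suff[OF op dm posF cF it1])
      show "\<forall>x\<in>?I. 1 * E a b 1 x \<le> 0"
      proof
        fix x assume x: "x \<in> ?I"
        have "1 \<le> b / a" using hb a by (simp add: le_divide_eq)
        then show "1 * E a b 1 x \<le> 0" using E1_G[of a x b] dm x a G1 yv[OF x] by auto
      qed
      fix n x assume x: "x \<in> ?I"
      show "1 * R n x (x + a) b \<ge> 0" using R1[of "x + a" x b n] x a hb by simp
    qed
  qed
  have B: "log_completely_monotonic_on (\<lambda>x. 1 / F a b x) ?I \<longleftrightarrow> 2 * b \<ge> a"
  proof
    assume h: "log_completely_monotonic_on (\<lambda>x. 1 / F a b x) ?I"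
    have N: "\<forall>x\<in>?I. -1 * (a * ((2*b - a) * x + a * b)) \<ge> 0" by (rule CL_nec[OF h dm it2])
    show "2 * b \<ge> a"
    proof (rule ccontr)
      assume "\<not> 2 * b \<ge> a"
      then obtain x where x: "x > -a" "(a - 2*b) * x + (- (a * b)) > 0"
        using inf_right[of "a - 2*b" "-a" "- (a*b)"] by auto
      have "a * ((2*b - a) * x + a * b) > 0" using a x(2) by (intro mult_neg_neg) (auto simp: algebra_simps)
      moreover have nx: "x \<in> ?I" using x(1) by simp
      moreover note bspec[OF N nx]
      ultimately show False by linarith
    qed
  next
    assume hb: "2 * b \<ge> a"
    show "log_completely_monotonic_on (\<lambda>x. 1 / F a b x) ?I"
    proof (rule CL_suff[OF op dm posFi cFi it2])
      show "\<forall>x\<in>?I. -1 * E a b 1 x \<le> 0"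
      proof
        fix x assume x: "x \<in> ?I"
        have "b / a \<le> 1/2" using hb a by (simp add: divide_le_eq)
        then show "-1 * E a b 1 x \<le> 0" using E1_G[of a x b] dm x a G2 yv[OF x] by auto
      qed
      fix n x assume x: "x \<in> ?I"
      show "-1 * R n x (x + a) b \<ge> 0" using R2[of "x + a" x b n] x a hb by simp
    qed
  qed
  show ?thesis using A B by blast
qed


lemma P2:
  assumes a: "a > 0"
  shows "(log_completely_monotonic_on (F a b) {0<..} \<longleftrightarrow> 2 * b \<ge> a) \<and>
         (log_completely_monotonic_on (\<lambda>x. 1 / F a b x) {0<..} \<longleftrightarrow> b \<le> 0)"
proof -
  let ?I = "{0::real<..}"
  have op: "open ?I" by simp
  have dm: "\<forall>x\<in>?I. dom_ok a x" using a by (auto intro!: dom_pos)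
  have it1: "\<And>k x. x \<in> ?I \<Longrightarrow> (deriv ^^ k) (\<lambda>y. ln (F a b y)) x = 1 * E a b k x"
    by (rule lnF_iter[OF op dm])
  have it2: "\<And>k x. x \<in> ?I \<Longrightarrow> (deriv ^^ k) (\<lambda>y. ln (1 / F a b y)) x = -1 * E a b k x"
    by (rule lnFi_iter[OF op dm])
  have posF: "\<forall>x\<in>?I. F a b x > 0" using dm F_pos by blast
  have posFi: "\<forall>x\<in>?I. 1 / F a b x > 0" using posF by simp
  have yv: "0 < 1 + a / x" "1 \<le> 1 + a / x" if "x \<in> ?I" for x
    using that a dm by (auto simp: dom_ok_def)
  have A: "log_completely_monotonic_on (F a b) ?I \<longleftrightarrow> 2 * b \<ge> a"
  proof
    assume h: "log_completely_monotonic_on (F a b) ?I"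
    have N: "\<forall>x\<in>?I. 1 * (a * ((2*b - a) * x + a * b)) \<ge> 0" by (rule CL_nec[OF h dm it1])
    show "2 * b \<ge> a"
    proof (rule ccontr)
      assume "\<not> 2 * b \<ge> a"
      then obtain x where x: "x > 0" "(a - 2*b) * x + (- (a * b)) > 0"
        using inf_right[of "a - 2*b" 0 "- (a*b)"] by auto
      have "a * ((2*b - a) * x + a * b) < 0" using a x(2) by (intro mult_pos_neg) (auto simp: algebra_simps)
      moreover have nx: "x \<in> ?I" using x(1) by simp
      moreover note bspec[OF N nx]
      ultimately show False by linarith
    qed
  next
    assume hb: "2 * b \<ge> a"
    show "log_completely_monotonic_on (F a b) ?I"
    proof (rule CL_suff[OF op dm posF cF it1])
      show "\<forall>x\<in>?I. 1 * E a b 1 x \<le> 0"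
      proof
        fix x assume x: "x \<in> ?I"
        have "1/2 \<le> b / a" using hb a by (simp add: le_divide_eq)
        then show "1 * E a b 1 x \<le> 0" using E1_G[of a x b] dm x a G3 yv[OF x] by auto
      qed
      fix n x assume x: "x \<in> ?I"
      show "1 * R n x (x + a) b \<ge> 0" using R3[of x "x + a" b n] x a hb by simp
    qed
  qed
  have B: "log_completely_monotonic_on (\<lambda>x. 1 / F a b x) ?I \<longleftrightarrow> b \<le> 0"
  proof
    assume h: "log_completely_monotonic_on (\<lambda>x. 1 / F a b x) ?I"
    have N: "\<forall>x\<in>?I. -1 * (a * ((2*b - a) * x + a * b)) \<ge> 0" by (rule CL_nec[OF h dm it2])
    show "b \<le> 0"
    proof (rule ccontr)
      assume "\<not> b \<le> 0"
      have "(2*b - a) * 0 + a * b > 0" using a \<open>\<not> b \<le> 0\<close> by simp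
      then obtain x where x: "x > 0" "(2*b - a) * x + a * b > 0"
        using lin_right[of "2*b - a" 0 "a*b"] by auto
      have "a * ((2*b - a) * x + a * b) > 0" using a x(2) by (rule mult_pos_pos)
      moreover have nx: "x \<in> ?I" using x(1) by simp
      moreover note bspec[OF N nx]
      ultimately show False by linarith
    qed
  next
    assume hb: "b \<le> 0"
    show "log_completely_monotonic_on (\<lambda>x. 1 / F a b x) ?I"
    proof (rule CL_suff[OF op dm posFi cFi it2])
      show "\<forall>x\<in>?I. -1 * E a b 1 x \<le> 0"
      proof
        fix x assume x: "x \<in> ?I"
        have "b / a \<le> 0" using hb a by (simp add: divide_le_0_iff)
        then have g: "G (1 + a / x) (b / a) \<ge> 0" using G4 yv(1)[OF x] by blast
        have "E a b 1 x = G (1 + a / x) (b / a)" using E1_G[of a x b] dm x a by simp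
        then show "-1 * E a b 1 x \<le> 0" using g by simp
      qed
      fix n x assume x: "x \<in> ?I"
      show "-1 * R n x (x + a) b \<ge> 0" using R4[of x "x + a" b n] x a hb by simp
    qed
  qed
  show ?thesis using A B by blast
qed

lemma P3:
  assumes a: "a < 0"
  shows "(log_absolutely_monotonic_on (F a b) {..<0} \<longleftrightarrow> b \<ge> 0) \<and>
         (log_absolutely_monotonic_on (\<lambda>x. 1 / F a b x) {..<0} \<longleftrightarrow> 2 * b \<le> a)"
proof -
  let ?I = "{..<0::real}"
  have op: "open ?I" by simp
  have dm: "\<forall>x\<in>?I. dom_ok a x" using a by (auto intro!: dom_neg)
  have it1: "\<And>k x. x \<in> ?I \<Longrightarrow> (deriv ^^ k) (\<lambda>y. ln (F a b y)) x = 1 * E a b k x"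
    by (rule lnF_iter[OF op dm])
  have it2: "\<And>k x. x \<in> ?I \<Longrightarrow> (deriv ^^ k) (\<lambda>y. ln (1 / F a b y)) x = -1 * E a b k x"
    by (rule lnFi_iter[OF op dm])
  have posF: "\<forall>x\<in>?I. F a b x > 0" using dm F_pos by blast
  have posFi: "\<forall>x\<in>?I. 1 / F a b x > 0" using posF by simp
  have yv: "0 < 1 + a / x" "1 \<le> 1 + a / x" if "x \<in> ?I" for x
    using that a dm by (auto simp: dom_ok_def divide_nonpos_neg)
  have A: "log_absolutely_monotonic_on (F a b) ?I \<longleftrightarrow> b \<ge> 0"
  proof
    assume h: "log_absolutely_monotonic_on (F a b) ?I"
    have N: "\<forall>x\<in>?I. 1 * (a * ((2*b - a) * x + a * b)) \<ge> 0" by (rule AL_nec[OF h dm it1])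
    show "b \<ge> 0"
    proof (rule ccontr)
      assume "\<not> b \<ge> 0"
      have "a * b > 0" using a \<open>\<not> b \<ge> 0\<close> by (intro mult_neg_neg) auto
      then have "(2*b - a) * 0 + a * b > 0" by simp
      then obtain x where x: "x < 0" "(2*b - a) * x + a * b > 0"
        using lin_left[of "2*b - a" 0 "a*b"] by auto
      have "a * ((2*b - a) * x + a * b) < 0" using a x(2) by (rule mult_neg_pos)
      moreover have nx: "x \<in> ?I" using x(1) by simp
      moreover note bspec[OF N nx]
      ultimately show False by linarith
    qed
  next
    assume hb: "b \<ge> 0"
    show "log_absolutely_monotonic_on (F a b) ?I"
    proof (rule AL_suff[OF op dm posF cF it1])
      show "\<forall>x\<in>?I. 1 * E a b 1 x \<ge> 0"
      proof
        fix x assume x: "x \<in> ?I"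
        have "b / a \<le> 0" using hb a by (simp add: divide_le_0_iff)
        then show "1 * E a b 1 x \<ge> 0" using E1_G[of a x b] dm x a G4 yv[OF x] by auto
      qed
      fix n x assume x: "x \<in> ?I"
      show "1 * R n (-x) (-(x + a)) (-b) \<le> 0" using R4[of "-x" "-(x + a)" "-b" n] x a hb by simp
    qed
  qed
  have B: "log_absolutely_monotonic_on (\<lambda>x. 1 / F a b x) ?I \<longleftrightarrow> 2 * b \<le> a"
  proof
    assume h: "log_absolutely_monotonic_on (\<lambda>x. 1 / F a b x) ?I"
    have N: "\<forall>x\<in>?I. -1 * (a * ((2*b - a) * x + a * b)) \<ge> 0" by (rule AL_nec[OF h dm it2])
    show "2 * b \<le> a"
    proof (rule ccontr)
      assume "\<not> 2 * b \<le> a"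
      then obtain x where x: "x < 0" "(a - 2*b) * x + (- (a * b)) > 0"
        using inf_left[of "a - 2*b" 0 "- (a*b)"] by auto
      have "a * ((2*b - a) * x + a * b) > 0" using a x(2) by (intro mult_neg_neg) (auto simp: algebra_simps)
      moreover have nx: "x \<in> ?I" using x(1) by simp
      moreover note bspec[OF N nx]
      ultimately show False by linarith
    qed
  next
    assume hb: "2 * b \<le> a"
    show "log_absolutely_monotonic_on (\<lambda>x. 1 / F a b x) ?I"
    proof (rule AL_suff[OF op dm posFi cFi it2])
      show "\<forall>x\<in>?I. -1 * E a b 1 x \<ge> 0"
      proof
        fix x assume x: "x \<in> ?I"
        have "1/2 \<le> b / a" using hb a by (simp add: le_divide_eq)
        then show "-1 * E a b 1 x \<ge> 0" using E1_G[of a x b] dm x a G3 yv[OF x] by auto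
      qed
      fix n x assume x: "x \<in> ?I"
      show "-1 * R n (-x) (-(x + a)) (-b) \<le> 0" using R3[of "-x" "-(x + a)" "-b" n] x a hb by simp
    qed
  qed
  show ?thesis using A B by blast
qed

lemma P4:
  assumes a: "a > 0"
  shows "(log_absolutely_monotonic_on (F a b) {..<-a} \<longleftrightarrow> 2 * b \<le> a) \<and>
         (log_absolutely_monotonic_on (\<lambda>x. 1 / F a b x) {..<-a} \<longleftrightarrow> b \<ge> a)"
proof -
  let ?I = "{..<-a}"
  have op: "open ?I" by simp
  have dm: "\<forall>x\<in>?I. dom_ok a x" using a by (auto intro!: dom_neg)
  have it1: "\<And>k x. x \<in> ?I \<Longrightarrow> (deriv ^^ k) (\<lambda>y. ln (F a b y)) x = 1 * E a b k x"
    by (rule lnF_iter[OF op dm])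
  have it2: "\<And>k x. x \<in> ?I \<Longrightarrow> (deriv ^^ k) (\<lambda>y. ln (1 / F a b y)) x = -1 * E a b k x"
    by (rule lnFi_iter[OF op dm])
  have posF: "\<forall>x\<in>?I. F a b x > 0" using dm F_pos by blast
  have posFi: "\<forall>x\<in>?I. 1 / F a b x > 0" using posF by simp
  have yv: "0 < 1 + a / x" "1 + a / x \<le> 1" if "x \<in> ?I" for x
  proof -
    show "0 < 1 + a / x" using that dm by (auto simp: dom_ok_def)
    have "x < 0" using that a by simp
    then have "a / x \<le> 0" using a by (simp add: divide_pos_neg less_imp_le)
    then show "1 + a / x \<le> 1" by simp
  qed
  have A: "log_absolutely_monotonic_on (F a b) ?I \<longleftrightarrow> 2 * b \<le> a"
  proof
    assume h: "log_absolutely_monotonic_on (F a b) ?I"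
    have N: "\<forall>x\<in>?I. 1 * (a * ((2*b - a) * x + a * b)) \<ge> 0" by (rule AL_nec[OF h dm it1])
    show "2 * b \<le> a"
    proof (rule ccontr)
      assume "\<not> 2 * b \<le> a"
      then obtain x where x: "x < -a" "(a - 2*b) * x + (- (a * b)) > 0"
        using inf_left[of "a - 2*b" "-a" "- (a*b)"] by auto
      have "a * ((2*b - a) * x + a * b) < 0" using a x(2) by (intro mult_pos_neg) (auto simp: algebra_simps)
      moreover have nx: "x \<in> ?I" using x(1) by simp
      moreover note bspec[OF N nx]
      ultimately show False by linarith
    qed
  next
    assume hb: "2 * b \<le> a"
    show "log_absolutely_monotonic_on (F a b) ?I"
    proof (rule AL_suff[OF op dm posF cF it1])
      show "\<forall>x\<in>?I. 1 * E a b 1 x \<ge> 0"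
      proof
        fix x assume x: "x \<in> ?I"
        have "b / a \<le> 1/2" using hb a by (simp add: divide_le_eq)
        then show "1 * E a b 1 x \<ge> 0" using E1_G[of a x b] dm x a G2 yv[OF x] by auto
      qed
      fix n x assume x: "x \<in> ?I"
      show "1 * R n (-x) (-(x + a)) (-b) \<le> 0" using R2[of "-(x + a)" "-x" "-b" n] x a hb by simp
    qed
  qed
  have B: "log_absolutely_monotonic_on (\<lambda>x. 1 / F a b x) ?I \<longleftrightarrow> b \<ge> a"
  proof
    assume h: "log_absolutely_monotonic_on (\<lambda>x. 1 / F a b x) ?I"
    have N: "\<forall>x\<in>?I. -1 * (a * ((2*b - a) * x + a * b)) \<ge> 0" by (rule AL_nec[OF h dm it2])
    show "b \<ge> a"
    proof (rule ccontr)
      assume "\<not> b \<ge> a"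
      have "(2*b - a) * (-a) + a * b = a * (a - b)" by (simp add: algebra_simps)
      moreover have "a * (a - b) > 0" using a \<open>\<not> b \<ge> a\<close> by (intro mult_pos_pos) auto
      ultimately obtain x where x: "x < -a" "(2*b - a) * x + a * b > 0"
        using lin_left[of "2*b - a" "-a" "a*b"] by auto
      have "a * ((2*b - a) * x + a * b) > 0" using a x(2) by (rule mult_pos_pos)
      moreover have nx: "x \<in> ?I" using x(1) by simp
      moreover note bspec[OF N nx]
      ultimately show False by linarith
    qed
  next
    assume hb: "b \<ge> a"
    show "log_absolutely_monotonic_on (\<lambda>x. 1 / F a b x) ?I"
    proof (rule AL_suff[OF op dm posFi cFi it2])
      show "\<forall>x\<in>?I. -1 * E a b 1 x \<ge> 0"
      proof
        fix x assume x: "x \<in> ?I"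
        have "1 \<le> b / a" using hb a by (simp add: le_divide_eq)
        then show "-1 * E a b 1 x \<ge> 0" using E1_G[of a x b] dm x a G1 yv[OF x] by auto
      qed
      fix n x assume x: "x \<in> ?I"
      show "-1 * R n (-x) (-(x + a)) (-b) \<le> 0" using R1[of "-(x + a)" "-x" "-b" n] x a hb by simp
    qed
  qed
  show ?thesis using A B by blast
qed



theorem theorem1p2:
  fixes \<alpha> \<beta> :: real
  assumes "\<alpha> \<noteq> 0"
  shows
   "(\<alpha> < 0 \<longrightarrow>
      (log_completely_monotonic_on (F \<alpha> \<beta>) {-\<alpha><..} \<longleftrightarrow> \<beta> \<le> \<alpha>) \<and>
      (log_completely_monotonic_on (\<lambda>x. 1 / F \<alpha> \<beta> x) {-\<alpha><..} \<longleftrightarrow> 2 * \<beta> \<ge> \<alpha>)) \<and>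
    (\<alpha> > 0 \<longrightarrow>
      (log_completely_monotonic_on (F \<alpha> \<beta>) {0<..} \<longleftrightarrow> 2 * \<beta> \<ge> \<alpha>) \<and>
      (log_completely_monotonic_on (\<lambda>x. 1 / F \<alpha> \<beta> x) {0<..} \<longleftrightarrow> \<beta> \<le> 0)) \<and>
    (\<alpha> < 0 \<longrightarrow>
      (log_absolutely_monotonic_on (F \<alpha> \<beta>) {..<0} \<longleftrightarrow> \<beta> \<ge> 0) \<and>
      (log_absolutely_monotonic_on (\<lambda>x. 1 / F \<alpha> \<beta> x) {..<0} \<longleftrightarrow> 2 * \<beta> \<le> \<alpha>)) \<and>
    (\<alpha> > 0 \<longrightarrow>
      (log_absolutely_monotonic_on (F \<alpha> \<beta>) {..<-\<alpha>} \<longleftrightarrow> 2 * \<beta> \<le> \<alpha>) \<and>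
      (log_absolutely_monotonic_on (\<lambda>x. 1 / F \<alpha> \<beta> x) {..<-\<alpha>} \<longleftrightarrow> \<beta> \<ge> \<alpha>))"
    using P1[of \<alpha> \<beta>] P2[of \<alpha> \<beta>] P3[of \<alpha> \<beta>] P4[of \<alpha> \<beta>] by blast

end
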